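(* Let $\mathbb{X},\mathbb{Y}$ be finite-dimensional real polyhedral Banach spaces and let $T\in\mathbb{L}(\mathbb{X},\mathbb{Y})$ be a bijective operator that preserves parallel pairs (equivalently, TEA pairs). Then: (i) $|\mathrm{Ext}\,B_{\mathbb{X}^*}|\ge|\mathrm{Ext}\,B_{\mathbb{Y}^*}|$; (ii) $|\mathrm{Ext}\,B_{\mathbb{X}^*}|=|\mathrm{Ext}\,B_{\mathbb{Y}^*}|$ if and only if for any two distinct $f_1,f_2\in\mathrm{Ext}\,B_{\mathbb{X}^*}$ there exist two distinct $g_1,g_2\in\mathrm{Ext}\,B_{\mathbb{Y}^*}$ such that $T(\mathrm{Sm}(f_1))\subset\mathrm{Sm}(g_1)$ and $T(\mathrm{Sm}(f_2))\subset\mathrm{Sm}(g_2)$.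
   Context: A finite-dimensional Banach space is polyhedral if its unit ball has finitely many extreme points. $\mathrm{Ext}\,B_{\mathbb{X}^*}$ is the (finite) set of extreme points of the dual unit ball. For non-zero $x$, $J(x)=\{f\in S_{\mathbb{X}^*}: f(x)=\|x\|\}$; for $f\in\mathrm{Ext}\,B_{\mathbb{X}^*}$, $\mathrm{Sm}(f)=\{x\in\mathbb{X}: J(x)=\{f\}\}$. $(x,y)$ is a parallel pair if $\|x+\lambda y\|=\|x\|+\|y\|$ for some $\lambda$ with $|\lambda|=1$; a TEA pair if $\|x+y\|=\|x\|+\|y\|$. $T$ preserves parallel pairs if $(x,y)$ parallel in $\mathbb{X}$ implies $(Tx,Ty)$ parallel in $\mathbb{Y}$. *)

theory Defs
  imports "HOL-Analysis.Analysis"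
begin

text \<open>A finite-dimensional real normed space is modelled as a Euclidean-space type
  'a (providing the finite-dimensional real vector space structure) together with an
  arbitrary norm N on it. The dual space is identified with 'a via u |-> (\<lambda>x. x \<bullet> u).\<close>

definition is_norm :: "('a::real_vector \<Rightarrow> real) \<Rightarrow> bool" where
  "is_norm N \<longleftrightarrow> (\<forall>x. 0 \<le> N x) \<and> (\<forall>x. N x = 0 \<longleftrightarrow> x = 0)
     \<and> (\<forall>c x. N (c *\<^sub>R x) = \<bar>c\<bar> * N x) \<and> (\<forall>x y. N (x + y) \<le> N x + N y)"

definition dual_norm :: "('a::euclidean_space \<Rightarrow> real) \<Rightarrow> 'a \<Rightarrow> real" where
  "dual_norm N u = (SUP x\<in>{x. N x \<le> 1}. x \<bullet> u)"

definition unit_ball :: "('a::real_vector \<Rightarrow> real) \<Rightarrow> 'a set" where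
  "unit_ball N = {x. N x \<le> 1}"

definition polyhedral :: "('a::real_vector \<Rightarrow> real) \<Rightarrow> bool" where
  "polyhedral N \<longleftrightarrow> finite {x. x extreme_point_of unit_ball N}"

definition ExtDual :: "('a::euclidean_space \<Rightarrow> real) \<Rightarrow> 'a set" where
  "ExtDual N = {u. u extreme_point_of unit_ball (dual_norm N)}"

definition Jset :: "('a::euclidean_space \<Rightarrow> real) \<Rightarrow> 'a \<Rightarrow> 'a set" where
  "Jset N x = {u. dual_norm N u = 1 \<and> x \<bullet> u = N x}"

definition Sm :: "('a::euclidean_space \<Rightarrow> real) \<Rightarrow> 'a \<Rightarrow> 'a set" where
  "Sm N f = {x. x \<noteq> 0 \<and> Jset N x = {f}}"

definition parallel_pair :: "('a::real_vector \<Rightarrow> real) \<Rightarrow> 'a \<Rightarrow> 'a \<Rightarrow> bool" where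
  "parallel_pair N x y \<longleftrightarrow> (\<exists>l::real. \<bar>l\<bar> = 1 \<and> N (x + l *\<^sub>R y) = N x + N y)"

end

theory Submission
  imports Defs
begin


locale pnorm =
  fixes N :: "'a::euclidean_space \<Rightarrow> real"
  assumes isn: "is_norm N" and poly: "polyhedral N"
begin

lemma N_nonneg: "0 \<le> N x" using isn by (simp add: is_norm_def)
lemma N_zero_iff: "N x = 0 \<longleftrightarrow> x = 0" using isn by (simp add: is_norm_def)
lemma N_scale: "N (c *\<^sub>R x) = \<bar>c\<bar> * N x" using isn by (simp add: is_norm_def)
lemma N_tri: "N (x + y) \<le> N x + N y" using isn by (simp add: is_norm_def)
lemma N_pos: "x \<noteq> 0 \<Longrightarrow> 0 < N x" using N_nonneg N_zero_iff by (metis less_eq_real_def)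
lemma N_neg: "N (- x) = N x" using N_scale[of "-1" x] by simp
lemma N_0[simp]: "N 0 = 0" using N_zero_iff by simp

lemma N_sum: "finite S \<Longrightarrow> N (sum f S) \<le> (\<Sum>i\<in>S. N (f i))"
proof (induction S rule: finite_induct)
  case empty then show ?case by simp
next
  case (insert a S)
  then show ?case using N_tri[of "f a" "sum f S"] by simp
qed

lemma N_upper: "\<exists>C>0. \<forall>x. N x \<le> C * norm x"
proof -
  define C where "C = 1 + (\<Sum>b\<in>Basis. N b)"
  have Cp: "C > 0" unfolding C_def using N_nonneg by (simp add: add_pos_nonneg sum_nonneg)
  have "N x \<le> C * norm x" for x
  proof -
    have "N x = N (\<Sum>b\<in>Basis. (x \<bullet> b) *\<^sub>R b)" by (simp add: euclidean_representation)
    also have "\<dots> \<le> (\<Sum>b\<in>Basis. N ((x \<bullet> b) *\<^sub>R b))" by (rule N_sum) simp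
    also have "\<dots> = (\<Sum>b\<in>Basis. \<bar>x \<bullet> b\<bar> * N b)" by (simp add: N_scale)
    also have "\<dots> \<le> (\<Sum>b\<in>Basis. norm x * N b)"
      by (intro sum_mono mult_right_mono Basis_le_norm N_nonneg) auto
    also have "\<dots> = norm x * (\<Sum>b\<in>Basis. N b)" by (simp add: sum_distrib_left)
    also have "\<dots> \<le> C * norm x" unfolding C_def by (simp add: algebra_simps)
    finally show ?thesis .
  qed
  then show ?thesis using Cp by blast
qed

lemma N_diff_le: "\<bar>N x - N y\<bar> \<le> N (x - y)"
proof -
  have "N x \<le> N (x - y) + N y" using N_tri[of "x - y" y] by simp
  moreover have "N y \<le> N (y - x) + N x" using N_tri[of "y - x" x] by simp
  moreover have "N (y - x) = N (x - y)" using N_neg[of "x - y"] by simp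
  ultimately show ?thesis by linarith
qed

lemma N_cont: "continuous_on UNIV N"
proof -
  obtain C where C: "C > 0" "\<And>x. N x \<le> C * norm x" using N_upper by blast
  have "lipschitz_on C UNIV N"
  proof (rule lipschitz_onI)
    fix x y :: 'a
    have "dist (N x) (N y) = \<bar>N x - N y\<bar>" by (simp add: dist_real_def)
    also have "\<dots> \<le> N (x - y)" by (rule N_diff_le)
    also have "\<dots> \<le> C * dist x y" using C(2)[of "x - y"] by (simp add: dist_norm)
    finally show "dist (N x) (N y) \<le> C * dist x y" .
  qed (use C in auto)
  then show ?thesis by (rule lipschitz_on_continuous_on)
qed

lemma N_lower: "\<exists>c>0. \<forall>x. c * norm x \<le> N x"
proof -
  have ne: "sphere (0::'a) 1 \<noteq> {}"
  proof -
    obtain b :: 'a where "b \<in> Basis" using nonempty_Basis by blast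
    then show ?thesis by (intro ex_in_conv[THEN iffD1] exI[of _ b]) auto
  qed
  obtain m where m: "m \<in> sphere 0 1" "\<And>y. y \<in> sphere 0 1 \<Longrightarrow> N m \<le> N y"
    using continuous_attains_inf[OF compact_sphere ne continuous_on_subset[OF N_cont]] by blast
  have "m \<noteq> 0" using m(1) by auto
  then have mp: "N m > 0" by (rule N_pos)
  have "N m * norm x \<le> N x" for x
  proof (cases "x = 0")
    case True then show ?thesis by simp
  next
    case False
    then have "(1 / norm x) *\<^sub>R x \<in> sphere 0 1" by simp
    then have "N m \<le> N ((1 / norm x) *\<^sub>R x)" by (rule m(2))
    also have "\<dots> = N x / norm x" by (simp add: N_scale)
    finally show ?thesis using False by (simp add: field_simps)
  qed
  then show ?thesis using mp by blast
qed

abbreviation "B \<equiv> unit_ball N"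

lemma B_iff: "x \<in> B \<longleftrightarrow> N x \<le> 1" by (simp add: unit_ball_def)

lemma B_closed: "closed B"
  unfolding unit_ball_def by (intro closed_Collect_le continuous_on_const N_cont) 

lemma B_bounded: "bounded B"
proof -
  obtain c where c: "c > 0" "\<And>x. c * norm x \<le> N x" using N_lower by blast
  have "norm x \<le> 1 / c" if "x \<in> B" for x
    using c(2)[of x] that c(1) by (simp add: B_iff field_simps)
  then show ?thesis unfolding bounded_iff by blast
qed

lemma B_compact: "compact B" using B_closed B_bounded by (simp add: compact_eq_bounded_closed)

lemma B_convex: "convex B"
proof (rule convexI)
  fix x y :: 'a and u v :: real
  assume a: "x \<in> B" "y \<in> B" "0 \<le> u" "0 \<le> v" "u + v = 1"
  have "N (u *\<^sub>R x + v *\<^sub>R y) \<le> N (u *\<^sub>R x) + N (v *\<^sub>R y)" by (rule N_tri)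
  also have "\<dots> = u * N x + v * N y" using a by (simp add: N_scale)
  also have "\<dots> \<le> u * 1 + v * 1" using a by (intro add_mono mult_left_mono) (auto simp: B_iff)
  finally show "u *\<^sub>R x + v *\<^sub>R y \<in> B" using a by (simp add: B_iff)
qed

lemma B_0: "0 \<in> B" by (simp add: B_iff)

lemma B_bdd: "bdd_above ((\<lambda>x. x \<bullet> u) ` B)"
proof -
  obtain r where r: "\<And>x. x \<in> B \<Longrightarrow> norm x \<le> r" using B_bounded unfolding bounded_iff by blast
  have "x \<bullet> u \<le> r * norm u" if "x \<in> B" for x
    using Cauchy_Schwarz_ineq2[of x u] r[OF that] by (meson abs_le_D1 mult_right_mono norm_ge_zero order_trans)
  then show ?thesis by (intro bdd_aboveI2) 
qed

lemma dn_le: "dual_norm N u \<le> r \<longleftrightarrow> (\<forall>x\<in>B. x \<bullet> u \<le> r)"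
  unfolding dual_norm_def unit_ball_def[symmetric]
  using B_0 B_bdd by (subst cSUP_le_iff) auto

lemma dn_ge: "x \<in> B \<Longrightarrow> x \<bullet> u \<le> dual_norm N u"
  unfolding dual_norm_def unit_ball_def[symmetric]
  using B_bdd by (intro cSUP_upper) auto

abbreviation "Db \<equiv> unit_ball (dual_norm N)"

lemma Db_B: "u \<in> Db \<longleftrightarrow> (\<forall>x\<in>B. x \<bullet> u \<le> 1)"
  and Db_B': "u \<in> Db \<longleftrightarrow> (\<forall>x. N x \<le> 1 \<longrightarrow> x \<bullet> u \<le> 1)"
  by (auto simp add: unit_ball_def dn_le)

lemma Db_iff: "u \<in> Db \<longleftrightarrow> (\<forall>x. x \<bullet> u \<le> N x)"
proof
  assume u: "u \<in> Db"
  show "\<forall>x. x \<bullet> u \<le> N x"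
  proof
    fix x :: 'a
    show "x \<bullet> u \<le> N x"
    proof (cases "x = 0")
      case True then show ?thesis by simp
    next
      case False
      then have p: "N x > 0" by (rule N_pos)
      have "(1 / N x) *\<^sub>R x \<in> B" using p by (simp add: B_iff N_scale)
      then have "((1 / N x) *\<^sub>R x) \<bullet> u \<le> 1" using u Db_B by blast
      then show ?thesis using p by (simp add: field_simps)
    qed
  qed
next
  assume "\<forall>x. x \<bullet> u \<le> N x"
  then show "u \<in> Db" unfolding Db_B' by (meson order_trans)
qed

definition "V = {x. x extreme_point_of B}"

lemma V_finite: "finite V" using poly by (simp add: polyhedral_def V_def)

lemma B_hull: "B = convex hull V"
  unfolding V_def using Krein_Milman_Minkowski[OF B_compact B_convex] .

lemma Db_V: "u \<in> Db \<longleftrightarrow> (\<forall>v\<in>V. v \<bullet> u \<le> 1)"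
proof
  assume u: "u \<in> Db"
  show "\<forall>v\<in>V. v \<bullet> u \<le> 1"
  proof
    fix v assume "v \<in> V"
    then have "v \<in> convex hull V" by (rule hull_inc)
    then have "v \<in> B" by (simp only: B_hull)
    then show "v \<bullet> u \<le> 1" using u Db_B by blast
  qed
next
  assume a: "\<forall>v\<in>V. v \<bullet> u \<le> 1"
  have "convex hull V \<subseteq> {x. u \<bullet> x \<le> 1}"
  proof (rule hull_minimal)
    show "V \<subseteq> {x. u \<bullet> x \<le> 1}" using a by (auto simp: inner_commute)
    show "convex {x. u \<bullet> x \<le> 1}" by (rule convex_halfspace_le)
  qed
  then show "u \<in> Db" unfolding Db_B B_hull[symmetric] by (auto simp: inner_commute)
qed

lemma Db_eq: "Db = \<Inter> ((\<lambda>v. {u. v \<bullet> u \<le> 1}) ` V)"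
  using Db_V by auto

lemma Db_polyhedron: "polyhedron Db"
  unfolding Db_eq by (intro polyhedron_Inter) (auto simp: V_finite polyhedron_halfspace_le)

lemma Db_bounded: "bounded Db"
proof -
  obtain C where C: "C > 0" "\<And>x. N x \<le> C * norm x" using N_upper by blast
  have "norm u \<le> C" if "u \<in> Db" for u
  proof (cases "u = 0")
    case True then show ?thesis using C by simp
  next
    case False
    define x where "x = (1 / (C * norm u)) *\<^sub>R u"
    have "N x \<le> C * norm x" by (rule C(2))
    also have "\<dots> = 1" using C(1) False by (simp add: x_def)
    finally have "x \<in> B" by (simp add: B_iff)
    then have "x \<bullet> u \<le> 1" using that Db_B by blast
    moreover have "x \<bullet> u = norm u / C" using C(1) False
      by (simp add: x_def power2_norm_eq_inner[symmetric] power2_eq_square)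
    ultimately show ?thesis using C(1) by (simp add: field_simps)
  qed
  then show ?thesis unfolding bounded_iff by blast
qed

lemma Db_compact: "compact Db"
  using Db_bounded polyhedron_imp_closed[OF Db_polyhedron] by (simp add: compact_eq_bounded_closed)

lemma Db_convex: "convex Db" using polyhedron_imp_convex[OF Db_polyhedron] .

abbreviation "Ext \<equiv> ExtDual N"

lemma Ext_finite: "finite Ext"
  unfolding ExtDual_def by (rule finite_polyhedron_extreme_points[OF Db_polyhedron])

lemma Db_hull: "Db = convex hull Ext"
  unfolding ExtDual_def using Krein_Milman_Minkowski[OF Db_compact Db_convex] .

lemma Ext_Db: "e \<in> Ext \<Longrightarrow> e \<in> Db"
  by (simp add: ExtDual_def extreme_point_of_def)

lemma Ext_le: "e \<in> Ext \<Longrightarrow> x \<bullet> e \<le> N x"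
  using Ext_Db Db_iff by blast

lemma comb: "u \<in> Db \<Longrightarrow> \<exists>l. (\<forall>e\<in>Ext. 0 \<le> l e) \<and> sum l Ext = 1 \<and> (\<Sum>e\<in>Ext. l e *\<^sub>R e) = u"
proof -
  assume "u \<in> Db"
  then have "u \<in> convex hull Ext" by (simp only: Db_hull)
  then have "u \<in> {y. \<exists>l. (\<forall>x\<in>Ext. 0 \<le> l x) \<and> sum l Ext = 1 \<and> (\<Sum>x\<in>Ext. l x *\<^sub>R x) = y}"
    by (simp only: convex_hull_finite[OF Ext_finite])
  then show ?thesis by (simp only: mem_Collect_eq)
qed

lemma comb_max:
  assumes "u \<in> Db" "x \<bullet> u = N x"
  shows "\<exists>l. (\<forall>e\<in>Ext. 0 \<le> l e) \<and> sum l Ext = 1 \<and> (\<Sum>e\<in>Ext. l e *\<^sub>R e) = u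
           \<and> (\<forall>e\<in>Ext. l e > 0 \<longrightarrow> x \<bullet> e = N x)"
proof -
  obtain l where l0: "(\<forall>e\<in>Ext. 0 \<le> l e) \<and> sum l Ext = 1 \<and> (\<Sum>e\<in>Ext. l e *\<^sub>R e) = u"
    using comb[OF assms(1)] by (rule exE)
  note l = l0[THEN conjunct1] l0[THEN conjunct2, THEN conjunct1] l0[THEN conjunct2, THEN conjunct2]
  have "x \<bullet> u = (\<Sum>e\<in>Ext. l e * (x \<bullet> e))" unfolding l(3)[symmetric] by (simp add: inner_sum_right)
  have s1: "(\<Sum>e\<in>Ext. l e * (N x - x \<bullet> e)) = (\<Sum>e\<in>Ext. l e * N x) - (\<Sum>e\<in>Ext. l e * (x \<bullet> e))"
    by (simp only: right_diff_distrib sum_subtractf)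
  have s2: "(\<Sum>e\<in>Ext. l e * N x) = (\<Sum>e\<in>Ext. l e) * N x" by (rule sum_distrib_right[symmetric])
  have "(\<Sum>e\<in>Ext. l e * (N x - x \<bullet> e)) = 0"
    using s1 s2 l(2) assms(2) \<open>x \<bullet> u = (\<Sum>e\<in>Ext. l e * (x \<bullet> e))\<close> by simp
  moreover have nn: "0 \<le> l e * (N x - x \<bullet> e)" if e: "e \<in> Ext" for e
  proof -
    have "0 \<le> l e" using l(1) e by blast
    moreover have "0 \<le> N x - x \<bullet> e" using Ext_le[OF e] by simp
    ultimately show ?thesis by (rule mult_nonneg_nonneg)
  qed
  ultimately have z: "\<forall>e\<in>Ext. l e * (N x - x \<bullet> e) = 0"
    using sum_nonneg_eq_0_iff[OF Ext_finite, of "\<lambda>e. l e * (N x - x \<bullet> e)", OF nn] by simp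
  have "\<forall>e\<in>Ext. l e > 0 \<longrightarrow> x \<bullet> e = N x"
  proof (intro ballI impI)
    fix e assume "e \<in> Ext" "l e > 0"
    then have "l e * (N x - x \<bullet> e) = 0" "l e \<noteq> 0" using z by auto
    then show "x \<bullet> e = N x" by simp
  qed
  then show ?thesis using l(1) l(2) l(3) by blast
qed

lemma bipolar: "\<exists>u\<in>Db. x \<bullet> u = N x"
proof (cases "x = 0")
  case True
  have "0 \<in> Db" by (simp add: Db_iff N_nonneg)
  then show ?thesis using True by auto
next
  case False
  obtain C where C: "C > 0" "\<And>x. N x \<le> C * norm x" using N_upper by blast
  have Nx: "N x > 0" using False by (rule N_pos)
  define p where "p = (1 / N x) *\<^sub>R x"
  have Np: "N p = 1" using Nx by (simp add: p_def N_scale)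
  have int0: "0 \<in> interior B"
  proof -
    have "ball 0 (1 / C) \<subseteq> B"
    proof
      fix y :: 'a assume "y \<in> ball 0 (1 / C)"
      then have "norm y < 1 / C" by simp
      then have "C * norm y \<le> 1" using C(1) by (simp add: field_simps)
      then show "y \<in> B" using C(2)[of y] by (simp add: B_iff)
    qed
    then show ?thesis using C(1) by (meson centre_in_ball divide_pos_pos interior_maximal open_ball subsetD zero_less_one)
  qed
  have pnot: "p \<notin> rel_interior B"
  proof
    assume "p \<in> rel_interior B"
    then have "p \<in> interior B" using rel_interior_nonempty_interior int0 by blast
    then obtain e where e: "e > 0" "ball p e \<subseteq> B" using mem_interior by blast
    have pn: "p \<noteq> 0" using Np by auto
    define q where "q = (1 + e / (2 * norm p)) *\<^sub>R p"
    have "dist p q = e / 2" using pn e(1) by (simp add: q_def dist_norm algebra_simps)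
    then have "q \<in> B" using e by auto
    moreover have "N q = 1 + e / (2 * norm p)" using pn e(1) Np
      by (simp add: q_def N_scale)
    moreover have "e / (2 * norm p) > 0" using pn e(1) by simp
    ultimately show False by (simp add: B_iff)
  qed
  have pB: "p \<in> closure B" using Np B_closed by (simp add: B_iff)
  have "\<exists>a. a \<noteq> 0 \<and> (\<forall>y\<in>closure B. a \<bullet> p \<le> a \<bullet> y)"
    by (rule supporting_hyperplane_relative_frontier[OF B_convex pB pnot]) blast
  then obtain a where a: "a \<noteq> 0" "\<forall>y\<in>closure B. a \<bullet> p \<le> a \<bullet> y" by blast
  define w where "w = - a"
  have w0: "w \<noteq> 0" using a(1) by (simp add: w_def)
  have wle: "y \<bullet> w \<le> p \<bullet> w" if "y \<in> B" for y
  proof -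
    have "y \<in> closure B" using that closure_subset by blast
    then have "a \<bullet> p \<le> a \<bullet> y" using a(2) by blast
    then show ?thesis by (simp add: w_def inner_commute)
  qed
  define y0 where "y0 = (1 / (C * norm w)) *\<^sub>R w"
  have "N y0 \<le> C * norm y0" by (rule C(2))
  also have "\<dots> = 1" using C(1) w0 by (simp add: y0_def)
  finally have "y0 \<in> B" by (simp add: B_iff)
  moreover have "y0 \<bullet> w = norm w / C" using C(1) w0
    by (simp add: y0_def power2_norm_eq_inner[symmetric] power2_eq_square)
  ultimately have pw: "p \<bullet> w > 0" using wle[of y0] C(1) w0 by (smt (verit) divide_pos_pos zero_less_norm_iff)
  define u where "u = (1 / (p \<bullet> w)) *\<^sub>R w"
  have "u \<in> Db" unfolding Db_B
  proof
    fix y assume "y \<in> B"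
    then have "y \<bullet> w \<le> p \<bullet> w" by (rule wle)
    then show "y \<bullet> u \<le> 1" using pw by (simp add: u_def field_simps)
  qed
  moreover have "x \<bullet> u = N x"
  proof -
    have "p \<bullet> u = 1" using pw by (simp add: u_def)
    moreover have "p \<bullet> u = (x \<bullet> u) / N x" by (simp add: p_def)
    ultimately show ?thesis using Nx by (simp add: field_simps)
  qed
  ultimately show ?thesis by blast
qed

lemma G3: "\<exists>e\<in>Ext. x \<bullet> e = N x"
proof -
  obtain u where u: "u \<in> Db" "x \<bullet> u = N x" using bipolar by blast
  obtain l :: "'a \<Rightarrow> real" where l: "\<forall>e\<in>Ext. 0 \<le> l e" "sum l Ext = 1" "\<forall>e\<in>Ext. l e > 0 \<longrightarrow> x \<bullet> e = N x"
    using comb_max[OF u] by blast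
  have "\<exists>e\<in>Ext. l e \<noteq> 0"
  proof (rule ccontr)
    assume "\<not> ?thesis" then have "sum l Ext = 0" by simp
    then show False using l(2) by simp
  qed
  then show ?thesis using l(1,3) by force
qed

lemma Db_neg: "u \<in> Db \<Longrightarrow> - u \<in> Db"
proof -
  assume u: "u \<in> Db"
  have "x \<bullet> (- u) \<le> N x" for x
  proof -
    have "\<forall>y. y \<bullet> u \<le> N y" using Db_iff[THEN iffD1, OF u] .
    then have "(- x) \<bullet> u \<le> N (- x)" by (rule spec)
    then show ?thesis by (simp add: N_neg)
  qed
  then have "\<forall>x. x \<bullet> (- u) \<le> N x" by blast
  then show "- u \<in> Db" using Db_iff[of "- u"] by simp
qed

lemma Ext_nz: "f \<in> Ext \<Longrightarrow> f \<noteq> 0"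
proof
  assume f: "f \<in> Ext" "f = 0"
  obtain b :: 'a where b: "b \<in> Basis" using nonempty_Basis by blast
  then have "b \<noteq> 0" by auto
  then have "N b > 0" by (rule N_pos)
  obtain u where u: "u \<in> Db" "b \<bullet> u = N b" using bipolar by blast
  then have u0: "u \<noteq> 0" using \<open>N b > 0\<close> by auto
  have "- u \<in> Db" using u(1) by (rule Db_neg)
  have "midpoint u (- u) = 0" by (simp add: midpoint_def)
  moreover have "u \<noteq> - u"
  proof
    assume h: "u = - u"
    have "u + u = u + - u" by (rule arg_cong[of _ _ "\<lambda>v. u + v"]) (rule h)
    then have "2 *\<^sub>R u = 0" by (simp add: scaleR_2)
    then show False using u0 by simp
  qed
  ultimately have "0 \<in> open_segment u (- u)" using midpoint_in_open_segment by metis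
  then show False using f u(1) \<open>- u \<in> Db\<close> by (auto simp: ExtDual_def extreme_point_of_def)
qed

lemma G5: "f \<in> Ext \<Longrightarrow> \<exists>z. \<forall>e\<in>Ext. e \<noteq> f \<longrightarrow> z \<bullet> e < z \<bullet> f"
proof -
  assume f: "f \<in> Ext"
  have "{f} face_of Db" using f by (simp add: face_of_singleton ExtDual_def)
  then have "{f} exposed_face_of Db" using exposed_face_of_polyhedron[OF Db_polyhedron] by blast
  then obtain a b where ab: "Db \<subseteq> {x. a \<bullet> x \<le> b}" "{f} = Db \<inter> {x. a \<bullet> x = b}"
    unfolding exposed_face_of_def by blast
  have "f \<in> Db \<inter> {x. a \<bullet> x = b}" by (subst ab(2)[symmetric]) simp
  then have "a \<bullet> f = b" by simp
  moreover have "a \<bullet> e < b" if "e \<in> Ext" "e \<noteq> f" for e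
  proof -
    have eD: "e \<in> Db" using that(1) by (rule Ext_Db)
    then have "a \<bullet> e \<le> b" using ab(1) by blast
    moreover have "a \<bullet> e \<noteq> b"
    proof
      assume "a \<bullet> e = b"
      then have "e \<in> Db \<inter> {x. a \<bullet> x = b}" using eD by simp
      then have "e \<in> {f}" by (subst ab(2)) 
      then show False using that(2) by simp
    qed
    ultimately show ?thesis by simp
  qed
  ultimately show ?thesis by auto
qed

lemma G6: "f \<in> Ext \<Longrightarrow> \<exists>e\<in>Ext. e \<noteq> f"
proof -
  assume f: "f \<in> Ext"
  obtain e where e: "e \<in> Ext" "(- f) \<bullet> e = N (- f)" using G3 by blast
  have "N (- f) > 0" using Ext_nz[OF f] by (simp add: N_pos)
  moreover have "(- f) \<bullet> f \<le> 0" by simp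
  ultimately have "e \<noteq> f" using e(2) by (metis not_le)
  then show ?thesis using e(1) by blast
qed

lemma Ext_attain: "f \<in> Ext \<Longrightarrow> \<forall>e\<in>Ext. e \<noteq> f \<longrightarrow> x \<bullet> e < x \<bullet> f \<Longrightarrow> x \<bullet> f = N x"
proof -
  assume f: "f \<in> Ext" and h: "\<forall>e\<in>Ext. e \<noteq> f \<longrightarrow> x \<bullet> e < x \<bullet> f"
  obtain e0 where e0: "e0 \<in> Ext" "x \<bullet> e0 = N x" using G3 by blast
  show ?thesis
  proof (cases "e0 = f")
    case True then show ?thesis using e0 by simp
  next
    case False
    then have "x \<bullet> e0 < x \<bullet> f" using h e0 by blast
    moreover have "x \<bullet> f \<le> N x" using Ext_le[OF f] .
    ultimately show ?thesis using e0 by simp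
  qed
qed

lemma Ext_attain_nz: "f \<in> Ext \<Longrightarrow> \<forall>e\<in>Ext. e \<noteq> f \<longrightarrow> x \<bullet> e < x \<bullet> f \<Longrightarrow> x \<noteq> 0"
proof
  assume f: "f \<in> Ext" and h: "\<forall>e\<in>Ext. e \<noteq> f \<longrightarrow> x \<bullet> e < x \<bullet> f" and x: "x = 0"
  obtain e where "e \<in> Ext" "e \<noteq> f" using G6[OF f] by blast
  then have "x \<bullet> e < x \<bullet> f" using h by blast
  then show False using x by simp
qed

lemma dn_ext: "f \<in> Ext \<Longrightarrow> dual_norm N f = 1"
proof -
  assume f: "f \<in> Ext"
  have le: "dual_norm N f \<le> 1" using Ext_Db[OF f] by (simp add: unit_ball_def)
  obtain z where z: "\<forall>e\<in>Ext. e \<noteq> f \<longrightarrow> z \<bullet> e < z \<bullet> f" using G5[OF f] by blast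
  have zf: "z \<bullet> f = N z" using Ext_attain[OF f z] .
  have "z \<noteq> 0" using Ext_attain_nz[OF f z] .
  then have Nz: "N z > 0" by (rule N_pos)
  have "(1 / N z) *\<^sub>R z \<in> B" using Nz by (simp add: B_iff N_scale)
  then have "((1 / N z) *\<^sub>R z) \<bullet> f \<le> dual_norm N f" by (rule dn_ge)
  then have "1 \<le> dual_norm N f" using zf Nz by simp
  then show ?thesis using le by simp
qed

lemma G4: "f \<in> Ext \<Longrightarrow> x \<in> Sm N f \<longleftrightarrow> x \<noteq> 0 \<and> (\<forall>e\<in>Ext. e \<noteq> f \<longrightarrow> x \<bullet> e < x \<bullet> f)"
proof
  assume f: "f \<in> Ext" and x: "x \<in> Sm N f"
  then have x0: "x \<noteq> 0" and J: "Jset N x = {f}" by (auto simp: Sm_def)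
  have xf: "x \<bullet> f = N x" using J by (auto simp: Jset_def)
  have "x \<bullet> e < x \<bullet> f" if "e \<in> Ext" "e \<noteq> f" for e
  proof -
    have "x \<bullet> e \<le> N x" using Ext_le[OF that(1)] .
    moreover have "x \<bullet> e \<noteq> N x"
    proof
      assume "x \<bullet> e = N x"
      then have "e \<in> Jset N x" using dn_ext[OF that(1)] by (simp add: Jset_def)
      then show False using J that(2) by auto
    qed
    ultimately show ?thesis using xf by simp
  qed
  then show "x \<noteq> 0 \<and> (\<forall>e\<in>Ext. e \<noteq> f \<longrightarrow> x \<bullet> e < x \<bullet> f)" using x0 by blast
next
  assume f: "f \<in> Ext" and h: "x \<noteq> 0 \<and> (\<forall>e\<in>Ext. e \<noteq> f \<longrightarrow> x \<bullet> e < x \<bullet> f)"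
  have xf: "x \<bullet> f = N x" using Ext_attain[OF f] h by blast
  have fJ: "f \<in> Jset N x" using xf dn_ext[OF f] by (simp add: Jset_def)
  have "u = f" if u: "u \<in> Jset N x" for u
  proof -
    have uD: "u \<in> Db" and ux: "x \<bullet> u = N x" using u by (auto simp: Jset_def unit_ball_def)
    obtain l :: "'a \<Rightarrow> real" where l: "\<forall>e\<in>Ext. 0 \<le> l e" "sum l Ext = 1" "(\<Sum>e\<in>Ext. l e *\<^sub>R e) = u"
      "\<forall>e\<in>Ext. l e > 0 \<longrightarrow> x \<bullet> e = N x"
      using comb_max[OF uD ux] by blast
    have l0: "\<forall>e\<in>Ext - {f}. l e = 0"
    proof
      fix e assume e: "e \<in> Ext - {f}"
      show "l e = 0"
      proof (rule ccontr)
        assume "l e \<noteq> 0"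
        then have "l e > 0" using l(1) e by (simp add: less_le)
        then have "x \<bullet> e = N x" using l(4) e by blast
        moreover have "x \<bullet> e < x \<bullet> f" using h e by blast
        ultimately show False using xf by simp
      qed
    qed
    have "sum l Ext = l f + sum l (Ext - {f})" using sum.remove[OF Ext_finite f] by simp
    also have "sum l (Ext - {f}) = 0" using l0 by simp
    finally have lf: "l f = 1" using l(2) by simp
    have "(\<Sum>e\<in>Ext. l e *\<^sub>R e) = l f *\<^sub>R f + (\<Sum>e\<in>Ext - {f}. l e *\<^sub>R e)"
      using sum.remove[OF Ext_finite f] by simp
    also have "(\<Sum>e\<in>Ext - {f}. l e *\<^sub>R e) = 0" using l0 by simp
    finally show "u = f" using l(3) lf by simp
  qed
  then have "Jset N x = {f}" using fJ by blast
  then show "x \<in> Sm N f" using h by (simp add: Sm_def)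
qed

end


lemma ev_lin:
  fixes a b c d :: real
  assumes "a < b"
  shows "eventually (\<lambda>t. a + t * c < b + t * d) (at_right 0)"
proof -
  have "((\<lambda>t. (b + t * d) - (a + t * c)) \<longlongrightarrow> (b + 0 * d) - (a + 0 * c)) (at_right 0)"
    by (intro tendsto_intros)
  then have "((\<lambda>t. (b + t * d) - (a + t * c)) \<longlongrightarrow> b - a) (at_right 0)" by simp
  moreover have "b - a > 0" using assms by simp
  ultimately have "eventually (\<lambda>t. (b + t * d) - (a + t * c) > 0) (at_right 0)"
    by (rule order_tendstoD(1))
  then show ?thesis by (rule eventually_mono) simp
qed

lemma ev_lin2:
  fixes a b c d :: real
  assumes "a \<le> b" "a = b \<Longrightarrow> c < d"
  shows "eventually (\<lambda>t. a + t * c < b + t * d) (at_right 0)"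
proof (cases "a < b")
  case True then show ?thesis by (rule ev_lin)
next
  case False
  then have ab: "a = b" using assms(1) by simp
  then have cd: "c < d" using assms(2) by simp
  show ?thesis
    using eventually_at_right_less[of "0::real"]
  proof (rule eventually_mono)
    fix t :: real assume "0 < t"
    then have "t * c < t * d" using cd by simp
    then show "a + t * c < b + t * d" using ab by simp
  qed
qed

lemma ev_ex: "eventually P (at_right (0::real)) \<Longrightarrow> \<exists>t>0. P t"
proof -
  assume "eventually P (at_right (0::real))"
  then obtain b :: real where b: "b > 0" "\<forall>y>0. y < b \<longrightarrow> P y"
    unfolding eventually_at_right_field by blast
  then have "P (b / 2)" by simp
  moreover have "b / 2 > 0" using b by simp
  ultimately show ?thesis by blast
qed

theorem mainTheorem16:
  fixes NX :: "'a::euclidean_space \<Rightarrow> real" and NY :: "'b::euclidean_space \<Rightarrow> real"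
    and T :: "'a \<Rightarrow> 'b"
  assumes "is_norm NX" and "is_norm NY"
    and "polyhedral NX" and "polyhedral NY"
    and "linear T" and "bij T"
    and "\<forall>x y. parallel_pair NX x y \<longrightarrow> parallel_pair NY (T x) (T y)"
  shows "card (ExtDual NX) \<ge> card (ExtDual NY) \<and>
    (card (ExtDual NX) = card (ExtDual NY) \<longleftrightarrow>
      (\<forall>f1\<in>ExtDual NX. \<forall>f2\<in>ExtDual NX. f1 \<noteq> f2 \<longrightarrow>
         (\<exists>g1\<in>ExtDual NY. \<exists>g2\<in>ExtDual NY. g1 \<noteq> g2 \<and>
            T ` Sm NX f1 \<subseteq> Sm NY g1 \<and> T ` Sm NX f2 \<subseteq> Sm NY g2)))"
proof -
  interpret X: pnorm NX using assms(1,3) by (rule pnorm.intro)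
  interpret Y: pnorm NY using assms(2,4) by (rule pnorm.intro)
  define EXX where "EXX = ExtDual NX"
  define EYY where "EYY = ExtDual NY"
  have finX: "finite EXX" unfolding EXX_def by (rule X.Ext_finite)
  have finY: "finite EYY" unfolding EYY_def by (rule Y.Ext_finite)
  have Tadd: "\<And>a b. T (a + b) = T a + T b" and Tsc: "\<And>c a. T (c *\<^sub>R a) = c *\<^sub>R T a"
    using assms(5) by (simp_all add: linear_iff)
  have T0: "T 0 = 0" using Tsc[of 0 0] by simp
  have injT: "inj T" using assms(6) by (rule bij_is_inj)
  have Tnz: "T x \<noteq> 0" if "x \<noteq> 0" for x
  proof
    assume "T x = 0"
    then have "T x = T 0" using T0 by simp
    then have "x = 0" by (rule injD[OF injT])
    then show False using that by simp
  qed
  have Tsurj: "\<exists>x. T x = y" for y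
  proof -
    have "surj T" using assms(6) by (rule bij_is_surj)
    then obtain x where "y = T x" by (rule surjE)
    then show ?thesis by blast
  qed
  have Tlin: "T (x + t *\<^sub>R z) = T x + t *\<^sub>R T z" for x z t by (simp add: Tadd Tsc)
  have inlin: "(x + t *\<^sub>R z) \<bullet> e = x \<bullet> e + t * (z \<bullet> e)" for x z e :: 'a and t
    by (simp add: inner_add_left)
  have inlinY: "(x + t *\<^sub>R z) \<bullet> e = x \<bullet> e + t * (z \<bullet> e)" for x z e :: 'b and t
    by (simp add: inner_add_left)

  have SmX: "x \<in> Sm NX f \<longleftrightarrow> (\<forall>e\<in>EXX. e \<noteq> f \<longrightarrow> x \<bullet> e < x \<bullet> f)" if "f \<in> EXX" for f x
    using X.G4[of f x] X.Ext_attain_nz[of f x] that unfolding EXX_def by blast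
  have SmY: "y \<in> Sm NY g \<longleftrightarrow> (\<forall>e\<in>EYY. e \<noteq> g \<longrightarrow> y \<bullet> e < y \<bullet> g)" if "g \<in> EYY" for g y
    using Y.G4[of g y] Y.Ext_attain_nz[of g y] that unfolding EYY_def by blast
  have attX: "x \<bullet> f = NX x" if "f \<in> EXX" "x \<in> Sm NX f" for f x
    using X.Ext_attain[of f x] SmX[OF that(1)] that unfolding EXX_def by blast
  have attY: "y \<bullet> g = NY y" if "g \<in> EYY" "\<forall>e\<in>EYY. e \<noteq> g \<longrightarrow> y \<bullet> e < y \<bullet> g" for g y
    using Y.Ext_attain[of g y] that unfolding EYY_def by blast
  have leX: "x \<bullet> e \<le> NX x" if "e \<in> EXX" for e x using X.Ext_le that unfolding EXX_def by blast
  have leY: "y \<bullet> e \<le> NY y" if "e \<in> EYY" for e y using Y.Ext_le that unfolding EYY_def by blast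
  have G3X: "\<exists>e\<in>EXX. x \<bullet> e = NX x" for x unfolding EXX_def by (rule X.G3)
  have G3Y: "\<exists>e\<in>EYY. y \<bullet> e = NY y" for y unfolding EYY_def by (rule Y.G3)
  have G5X: "\<exists>z. \<forall>e\<in>EXX. e \<noteq> f \<longrightarrow> z \<bullet> e < z \<bullet> f" if "f \<in> EXX" for f
    using X.G5 that unfolding EXX_def by blast
  have G5Y: "\<exists>z. \<forall>e\<in>EYY. e \<noteq> g \<longrightarrow> z \<bullet> e < z \<bullet> g" if "g \<in> EYY" for g
    using Y.G5 that unfolding EYY_def by blast
  have SmX_ne: "\<exists>x. x \<in> Sm NX f" if "f \<in> EXX" for f
    using G5X[OF that] SmX[OF that] by blast
  have SmY_ne: "\<exists>y. y \<in> Sm NY g" if "g \<in> EYY" for g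
    using G5Y[OF that] SmY[OF that] by blast
  have Sm_disj: "g1 = g2" if "y \<in> Sm NY g1" "y \<in> Sm NY g2" for y g1 g2
    using that unfolding Sm_def by auto
  have uniqY: "g = g1" if "g \<in> EYY" "g1 \<in> EYY" "\<forall>e\<in>EYY. e \<noteq> g1 \<longrightarrow> y \<bullet> e < y \<bullet> g1"
    "y \<bullet> g = NY y" for g g1 y
  proof (rule ccontr)
    assume "g \<noteq> g1"
    then have "y \<bullet> g < y \<bullet> g1" using that by blast
    moreover have "y \<bullet> g1 \<le> NY y" using leY[OF that(2)] .
    ultimately show False using that(4) by simp
  qed

  have key: "T x2 \<bullet> g1 = - NY (T x2)"
    if f: "f \<in> EXX" and x1: "x1 \<in> Sm NX f" and x2: "x2 \<in> Sm NX f"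
      and g: "g1 \<in> EYY" "g2 \<in> EYY" "g1 \<noteq> g2"
      and s1: "\<forall>e\<in>EYY. e \<noteq> g1 \<longrightarrow> T x1 \<bullet> e < T x1 \<bullet> g1"
      and s2: "\<forall>e\<in>EYY. e \<noteq> g2 \<longrightarrow> T x2 \<bullet> e < T x2 \<bullet> g2"
    for f x1 x2 g1 g2
  proof -
    have "(x1 + x2) \<bullet> f = NX x1 + NX x2"
      using attX[OF f x1] attX[OF f x2] by (simp add: inner_add_left)
    moreover have "(x1 + x2) \<bullet> f \<le> NX (x1 + x2)" by (rule leX[OF f])
    moreover have "NX (x1 + x2) \<le> NX x1 + NX x2" by (rule X.N_tri)
    ultimately have "NX (x1 + 1 *\<^sub>R x2) = NX x1 + NX x2" by simp
    then have "parallel_pair NX x1 x2" unfolding parallel_pair_def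
      by (intro exI[of _ "1::real"]) simp
    then have "parallel_pair NY (T x1) (T x2)" using assms(7) by blast
    then obtain l :: real where l: "\<bar>l\<bar> = 1" "NY (T x1 + l *\<^sub>R T x2) = NY (T x1) + NY (T x2)"
      unfolding parallel_pair_def by blast
    obtain g where gE: "g \<in> EYY" and gatt: "(T x1 + l *\<^sub>R T x2) \<bullet> g = NY (T x1 + l *\<^sub>R T x2)"
      using G3Y by blast
    have a1: "T x1 \<bullet> g \<le> NY (T x1)" by (rule leY[OF gE])
    have a2: "(l *\<^sub>R T x2) \<bullet> g \<le> NY (l *\<^sub>R T x2)" by (rule leY[OF gE])
    have nl: "NY (l *\<^sub>R T x2) = NY (T x2)" using l(1) by (simp add: Y.N_scale)
    have sum: "(T x1 + l *\<^sub>R T x2) \<bullet> g = T x1 \<bullet> g + (l *\<^sub>R T x2) \<bullet> g" by (rule inner_add_left)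
    have e1: "T x1 \<bullet> g = NY (T x1)" using a1 a2 nl sum gatt l(2) by linarith
    have e2: "(l *\<^sub>R T x2) \<bullet> g = NY (T x2)" using a1 a2 nl sum gatt l(2) by linarith
    have gg: "g = g1" by (rule uniqY[OF gE g(1) s1 e1])
    have "l = 1 \<or> l = -1" using l(1) by linarith
    then show ?thesis
    proof
      assume "l = 1"
      then have "T x2 \<bullet> g1 = NY (T x2)" using e2 gg by simp
      then have "g1 = g2" by (rule uniqY[OF g(1) g(2) s2])
      then show ?thesis using g(3) by simp
    next
      assume "l = -1"
      then show ?thesis using e2 gg by simp
    qed
  qed

  have stepB: False
    if f: "f \<in> EXX" and x: "x \<in> Sm NX f" and g: "g1 \<in> EYY" "g2 \<in> EYY" "g1 \<noteq> g2"
      and a1: "T x \<bullet> g1 = NY (T x)" and a2: "T x \<bullet> g2 = NY (T x)"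
    for f x g1 g2
  proof -
    have x0: "x \<noteq> 0" using x by (simp add: Sm_def)
    have NTx: "NY (T x) > 0" using Tnz[OF x0] by (rule Y.N_pos)
    have xs: "\<forall>e\<in>EXX. e \<noteq> f \<longrightarrow> x \<bullet> e < x \<bullet> f" using x SmX[OF f] by blast
    have pert: "eventually (\<lambda>t. x + t *\<^sub>R z \<in> Sm NX f \<and>
        (\<forall>e\<in>EYY. e \<noteq> g \<longrightarrow> T (x + t *\<^sub>R z) \<bullet> e < T (x + t *\<^sub>R z) \<bullet> g) \<and>
        0 < T (x + t *\<^sub>R z) \<bullet> g') (at_right 0)"
      if gE: "g \<in> EYY" and ga: "T x \<bullet> g = NY (T x)" and g'a: "T x \<bullet> g' = NY (T x)"
        and z: "\<forall>e\<in>EYY. e \<noteq> g \<longrightarrow> T z \<bullet> e < T z \<bullet> g" for g g' z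
    proof -
      have ev1: "eventually (\<lambda>t. \<forall>e\<in>EXX. e \<noteq> f \<longrightarrow> (x + t *\<^sub>R z) \<bullet> e < (x + t *\<^sub>R z) \<bullet> f) (at_right 0)"
      proof (rule eventually_ball_finite[OF finX], rule ballI)
        fix e assume e: "e \<in> EXX"
        show "eventually (\<lambda>t. e \<noteq> f \<longrightarrow> (x + t *\<^sub>R z) \<bullet> e < (x + t *\<^sub>R z) \<bullet> f) (at_right 0)"
        proof (cases "e = f")
          case True then show ?thesis by simp
        next
          case False
          then have "x \<bullet> e < x \<bullet> f" using xs e by blast
          then have "eventually (\<lambda>t. x \<bullet> e + t * (z \<bullet> e) < x \<bullet> f + t * (z \<bullet> f)) (at_right 0)"
            by (rule ev_lin)
          then show ?thesis by (rule eventually_mono) (simp add: inlin)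
        qed
      qed
      have ev2: "eventually (\<lambda>t. \<forall>e\<in>EYY. e \<noteq> g \<longrightarrow> T (x + t *\<^sub>R z) \<bullet> e < T (x + t *\<^sub>R z) \<bullet> g) (at_right 0)"
      proof (rule eventually_ball_finite[OF finY], rule ballI)
        fix e assume e: "e \<in> EYY"
        show "eventually (\<lambda>t. e \<noteq> g \<longrightarrow> T (x + t *\<^sub>R z) \<bullet> e < T (x + t *\<^sub>R z) \<bullet> g) (at_right 0)"
        proof (cases "e = g")
          case True then show ?thesis by simp
        next
          case False
          have "T x \<bullet> e \<le> T x \<bullet> g" using leY[OF e] ga by simp
          moreover have "T z \<bullet> e < T z \<bullet> g" using z e False by blast
          ultimately have "eventually (\<lambda>t. T x \<bullet> e + t * (T z \<bullet> e) < T x \<bullet> g + t * (T z \<bullet> g)) (at_right 0)"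
            by (intro ev_lin2)
          then show ?thesis by (rule eventually_mono) (simp add: Tlin inlinY)
        qed
      qed
      have ev3: "eventually (\<lambda>t. 0 < T (x + t *\<^sub>R z) \<bullet> g') (at_right 0)"
      proof -
        have "0 < T x \<bullet> g'" using g'a NTx by simp
        then have "eventually (\<lambda>t. 0 + t * 0 < T x \<bullet> g' + t * (T z \<bullet> g')) (at_right 0)"
          by (intro ev_lin) simp
        then show ?thesis by (rule eventually_mono) (simp add: Tlin inlinY)
      qed
      have ev1': "eventually (\<lambda>t. x + t *\<^sub>R z \<in> Sm NX f) (at_right 0)"
        using ev1 by (rule eventually_mono) (simp add: SmX[OF f])
      show ?thesis using eventually_conj[OF ev1' eventually_conj[OF ev2 ev3]] .
    qed
    obtain w1 where w1: "\<forall>e\<in>EYY. e \<noteq> g1 \<longrightarrow> w1 \<bullet> e < w1 \<bullet> g1" using G5Y[OF g(1)] by blast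
    obtain z1 where z1: "T z1 = w1" using Tsurj by blast
    obtain w2 where w2: "\<forall>e\<in>EYY. e \<noteq> g2 \<longrightarrow> w2 \<bullet> e < w2 \<bullet> g2" using G5Y[OF g(2)] by blast
    obtain z2 where z2: "T z2 = w2" using Tsurj by blast
    obtain t1 where t1: "x + t1 *\<^sub>R z1 \<in> Sm NX f"
      "\<forall>e\<in>EYY. e \<noteq> g1 \<longrightarrow> T (x + t1 *\<^sub>R z1) \<bullet> e < T (x + t1 *\<^sub>R z1) \<bullet> g1"
      using ev_ex[OF pert[OF g(1) a1 a1, of z1]] w1 z1 by blast
    obtain t2 where t2: "x + t2 *\<^sub>R z2 \<in> Sm NX f"
      "\<forall>e\<in>EYY. e \<noteq> g2 \<longrightarrow> T (x + t2 *\<^sub>R z2) \<bullet> e < T (x + t2 *\<^sub>R z2) \<bullet> g2"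
      "0 < T (x + t2 *\<^sub>R z2) \<bullet> g1"
      using ev_ex[OF pert[OF g(2) a2 a1, of z2]] w2 z2 by blast
    have "T (x + t2 *\<^sub>R z2) \<bullet> g1 = - NY (T (x + t2 *\<^sub>R z2))"
      by (rule key[OF f t1(1) t2(1) g t1(2) t2(2)])
    moreover have "0 \<le> NY (T (x + t2 *\<^sub>R z2))" by (rule Y.N_nonneg)
    ultimately show False using t2(3) by simp
  qed

  have strict: "\<forall>e\<in>EYY. e \<noteq> g \<longrightarrow> T x \<bullet> e < T x \<bullet> g"
    if f: "f \<in> EXX" and x: "x \<in> Sm NX f" and g: "g \<in> EYY" and a: "T x \<bullet> g = NY (T x)" for f x g
  proof (intro ballI impI)
    fix e assume e: "e \<in> EYY" "e \<noteq> g"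
    have "T x \<bullet> e \<le> NY (T x)" by (rule leY[OF e(1)])
    moreover have "T x \<bullet> e \<noteq> NY (T x)"
    proof
      assume "T x \<bullet> e = NY (T x)"
      then show False using stepB[OF f x g e(1) _ a] e(2) by metis
    qed
    ultimately show "T x \<bullet> e < T x \<bullet> g" using a by simp
  qed

  have stepA: False
    if f: "f \<in> EXX" and x: "x \<in> Sm NX f" and y: "y \<in> Sm NX f"
      and g: "g1 \<in> EYY" "g2 \<in> EYY" "g1 \<noteq> g2"
      and s1: "\<forall>e\<in>EYY. e \<noteq> g1 \<longrightarrow> T x \<bullet> e < T x \<bullet> g1"
      and s2: "\<forall>e\<in>EYY. e \<noteq> g2 \<longrightarrow> T y \<bullet> e < T y \<bullet> g2"
    for f x y g1 g2
  proof -
    define a where "a g = T x \<bullet> g1 - T x \<bullet> g" for g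
    define b where "b g = T y \<bullet> g1 - T y \<bullet> g" for g
    define R where "R = {g \<in> EYY. g \<noteq> g1 \<and> b g \<le> 0}"
    define tt where "tt g = a g / (a g - b g)" for g
    have apos: "a g > 0" if "g \<in> EYY" "g \<noteq> g1" for g using s1 that by (simp add: a_def)
    have g2R: "g2 \<in> R"
    proof -
      have "T y \<bullet> g1 < T y \<bullet> g2" using s2 g by blast
      then show ?thesis using g by (simp add: R_def b_def)
    qed
    have finR: "finite R" using finY by (simp add: R_def)
    have neR: "R \<noteq> {}" using g2R by blast
    define tau where "tau = Min (tt ` R)"
    have "tau \<in> tt ` R" unfolding tau_def using finR neR by simp
    then obtain gs where gs: "gs \<in> R" "tt gs = tau" by blast
    have taule: "tau \<le> tt g" if "g \<in> R" for g
      unfolding tau_def using finR that by simp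
    have gsE: "gs \<in> EYY" "gs \<noteq> g1" "b gs \<le> 0" using gs(1) by (auto simp: R_def)
    have ags: "a gs > 0" using apos gsE by simp
    have taueq: "tau = a gs / (a gs - b gs)" using gs(2) by (simp add: tt_def)
    have dpos: "a gs - b gs > 0" using ags gsE(3) by simp
    have tau_pos: "tau > 0" unfolding taueq using ags dpos by (rule divide_pos_pos)
    have tau_le1: "tau \<le> 1" unfolding taueq using dpos gsE(3) by (simp add: divide_le_eq)
    define w where "w = (1 - tau) *\<^sub>R x + tau *\<^sub>R y"
    have wS: "w \<in> Sm NX f" unfolding SmX[OF f]
    proof (intro ballI impI)
      fix e assume e: "e \<in> EXX" "e \<noteq> f"
      have "x \<bullet> e < x \<bullet> f" "y \<bullet> e < y \<bullet> f" using x y SmX[OF f] e by blast+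
      then have "(1 - tau) * (x \<bullet> e) \<le> (1 - tau) * (x \<bullet> f)" "tau * (y \<bullet> e) < tau * (y \<bullet> f)"
        using tau_pos tau_le1 by (simp_all add: mult_left_mono)
      then show "w \<bullet> e < w \<bullet> f" by (simp add: w_def inner_add_left)
    qed
    have Tweq: "T w = (1 - tau) *\<^sub>R T x + tau *\<^sub>R T y" by (simp only: w_def Tadd Tsc)
    have Tw: "T w \<bullet> g1 - T w \<bullet> g = (1 - tau) * a g + tau * b g" for g
      unfolding Tweq by (simp add: inner_add_left a_def b_def algebra_simps)
    have wle: "T w \<bullet> g \<le> T w \<bullet> g1" if ge: "g \<in> EYY" for g
    proof (cases "g = g1")
      case True then show ?thesis by simp
    next
      case False
      have ag: "a g > 0" using apos ge False by simp
      show ?thesis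
      proof (cases "b g \<le> 0")
        case True
        then have "g \<in> R" using ge False by (simp add: R_def)
        then have "tau \<le> tt g" by (rule taule)
        then have "tau * (a g - b g) \<le> a g" using ag True by (simp add: tt_def field_simps)
        then have "0 \<le> (1 - tau) * a g + tau * b g" by (simp add: algebra_simps)
        then show ?thesis using Tw[of g] by simp
      next
        case False
        then have "0 \<le> (1 - tau) * a g + tau * b g" using ag tau_pos tau_le1
          by (intro add_nonneg_nonneg mult_nonneg_nonneg) simp_all
        then show ?thesis using Tw[of g] by simp
      qed
    qed
    have att1: "T w \<bullet> g1 = NY (T w)"
    proof -
      obtain g0 where g0: "g0 \<in> EYY" "T w \<bullet> g0 = NY (T w)" using G3Y by blast
      have "T w \<bullet> g0 \<le> T w \<bullet> g1" by (rule wle[OF g0(1)])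
      moreover have "T w \<bullet> g1 \<le> NY (T w)" by (rule leY[OF g(1)])
      ultimately show ?thesis using g0(2) by simp
    qed
    have "T w \<bullet> g1 - T w \<bullet> gs = 0"
      using Tw[of gs] gs(2) ags gsE(3) by (simp add: tt_def field_simps)
    then have att2: "T w \<bullet> gs = NY (T w)" using att1 by simp
    show False by (rule stepB[OF f wS g(1) gsE(1) gsE(2)[symmetric] att1 att2])
  qed

  have claim: "\<exists>g\<in>EYY. T ` Sm NX f \<subseteq> Sm NY g" if f: "f \<in> EXX" for f
  proof -
    obtain x0 where x0: "x0 \<in> Sm NX f" using SmX_ne[OF f] by blast
    obtain g where g: "g \<in> EYY" "T x0 \<bullet> g = NY (T x0)" using G3Y by blast
    have sg: "\<forall>e\<in>EYY. e \<noteq> g \<longrightarrow> T x0 \<bullet> e < T x0 \<bullet> g" by (rule strict[OF f x0 g])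
    have "T x \<in> Sm NY g" if x: "x \<in> Sm NX f" for x
    proof -
      obtain gx where gx: "gx \<in> EYY" "T x \<bullet> gx = NY (T x)" using G3Y by blast
      have sx: "\<forall>e\<in>EYY. e \<noteq> gx \<longrightarrow> T x \<bullet> e < T x \<bullet> gx" by (rule strict[OF f x gx])
      have "gx = g"
      proof (rule ccontr)
        assume "gx \<noteq> g"
        then show False using stepA[OF f x0 x g(1) gx(1) _ sg sx] by metis
      qed
      then show ?thesis using sx SmY[OF g(1)] by simp
    qed
    then show ?thesis using g(1) by blast
  qed

  define phi where "phi f = (SOME g. g \<in> EYY \<and> T ` Sm NX f \<subseteq> Sm NY g)" for f
  have phi: "phi f \<in> EYY" "T ` Sm NX f \<subseteq> Sm NY (phi f)" if "f \<in> EXX" for f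
  proof -
    have "\<exists>g. g \<in> EYY \<and> T ` Sm NX f \<subseteq> Sm NY g" using claim[OF that] by blast
    then have "phi f \<in> EYY \<and> T ` Sm NX f \<subseteq> Sm NY (phi f)" unfolding phi_def by (rule someI_ex)
    then show "phi f \<in> EYY" "T ` Sm NX f \<subseteq> Sm NY (phi f)" by blast+
  qed
  have phi_uniq: "g = phi f" if f: "f \<in> EXX" and sub: "T ` Sm NX f \<subseteq> Sm NY g" for f g
  proof -
    obtain x where x: "x \<in> Sm NX f" using SmX_ne[OF f] by blast
    have "T x \<in> Sm NY g" using sub x by blast
    moreover have "T x \<in> Sm NY (phi f)" using phi(2)[OF f] x by blast
    ultimately show ?thesis by (rule Sm_disj)
  qed
  have phi_surj: "\<exists>f\<in>EXX. phi f = g" if g: "g \<in> EYY" for g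
  proof -
    obtain y0 where y0: "y0 \<in> Sm NY g" using SmY_ne[OF g] by blast
    have ys: "\<forall>e\<in>EYY. e \<noteq> g \<longrightarrow> y0 \<bullet> e < y0 \<bullet> g" using y0 SmY[OF g] by blast
    obtain x where x: "T x = y0" using Tsurj by blast
    obtain f where f: "f \<in> EXX" "x \<bullet> f = NX x" using G3X by blast
    obtain z where z: "\<forall>e\<in>EXX. e \<noteq> f \<longrightarrow> z \<bullet> e < z \<bullet> f" using G5X[OF f(1)] by blast
    have ev1: "eventually (\<lambda>t. \<forall>e\<in>EXX. e \<noteq> f \<longrightarrow> (x + t *\<^sub>R z) \<bullet> e < (x + t *\<^sub>R z) \<bullet> f) (at_right 0)"
    proof (rule eventually_ball_finite[OF finX], rule ballI)
      fix e assume e: "e \<in> EXX"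
      show "eventually (\<lambda>t. e \<noteq> f \<longrightarrow> (x + t *\<^sub>R z) \<bullet> e < (x + t *\<^sub>R z) \<bullet> f) (at_right 0)"
      proof (cases "e = f")
        case True then show ?thesis by simp
      next
        case False
        have "x \<bullet> e \<le> x \<bullet> f" using leX[OF e] f(2) by simp
        moreover have "z \<bullet> e < z \<bullet> f" using z e False by blast
        ultimately have "eventually (\<lambda>t. x \<bullet> e + t * (z \<bullet> e) < x \<bullet> f + t * (z \<bullet> f)) (at_right 0)"
          by (intro ev_lin2)
        then show ?thesis by (rule eventually_mono) (simp add: inlin)
      qed
    qed
    have ev2: "eventually (\<lambda>t. \<forall>e\<in>EYY. e \<noteq> g \<longrightarrow> T (x + t *\<^sub>R z) \<bullet> e < T (x + t *\<^sub>R z) \<bullet> g) (at_right 0)"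
    proof (rule eventually_ball_finite[OF finY], rule ballI)
      fix e assume e: "e \<in> EYY"
      show "eventually (\<lambda>t. e \<noteq> g \<longrightarrow> T (x + t *\<^sub>R z) \<bullet> e < T (x + t *\<^sub>R z) \<bullet> g) (at_right 0)"
      proof (cases "e = g")
        case True then show ?thesis by simp
      next
        case False
        have "T x \<bullet> e < T x \<bullet> g" using ys e False x by blast
        then have "eventually (\<lambda>t. T x \<bullet> e + t * (T z \<bullet> e) < T x \<bullet> g + t * (T z \<bullet> g)) (at_right 0)"
          by (rule ev_lin)
        then show ?thesis by (rule eventually_mono) (simp add: Tlin inlinY)
      qed
    qed
    obtain t where t: "\<forall>e\<in>EXX. e \<noteq> f \<longrightarrow> (x + t *\<^sub>R z) \<bullet> e < (x + t *\<^sub>R z) \<bullet> f"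
      "\<forall>e\<in>EYY. e \<noteq> g \<longrightarrow> T (x + t *\<^sub>R z) \<bullet> e < T (x + t *\<^sub>R z) \<bullet> g"
      using ev_ex[OF eventually_conj[OF ev1 ev2]] by blast
    have xS: "x + t *\<^sub>R z \<in> Sm NX f" using t(1) SmX[OF f(1)] by blast
    have yS: "T (x + t *\<^sub>R z) \<in> Sm NY g" using t(2) SmY[OF g] by blast
    have "T (x + t *\<^sub>R z) \<in> Sm NY (phi f)" using phi(2)[OF f(1)] xS by blast
    then have "phi f = g" using yS by (rule Sm_disj)
    then show ?thesis using f(1) by blast
  qed
  have img: "phi ` EXX = EYY"
  proof
    show "phi ` EXX \<subseteq> EYY" using phi(1) by blast
    show "EYY \<subseteq> phi ` EXX" using phi_surj by force
  qed
  have part1: "card EYY \<le> card EXX"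
    using card_image_le[OF finX, of phi] img by simp
  have part2: "card EXX = card EYY \<longleftrightarrow>
      (\<forall>f1\<in>EXX. \<forall>f2\<in>EXX. f1 \<noteq> f2 \<longrightarrow>
         (\<exists>g1\<in>EYY. \<exists>g2\<in>EYY. g1 \<noteq> g2 \<and> T ` Sm NX f1 \<subseteq> Sm NY g1 \<and> T ` Sm NX f2 \<subseteq> Sm NY g2))"
  proof
    assume c: "card EXX = card EYY"
    have "inj_on phi EXX"
      by (rule eq_card_imp_inj_on[OF finX]) (simp add: img c)
    show "\<forall>f1\<in>EXX. \<forall>f2\<in>EXX. f1 \<noteq> f2 \<longrightarrow>
         (\<exists>g1\<in>EYY. \<exists>g2\<in>EYY. g1 \<noteq> g2 \<and> T ` Sm NX f1 \<subseteq> Sm NY g1 \<and> T ` Sm NX f2 \<subseteq> Sm NY g2)"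
    proof (intro ballI impI)
      fix f1 f2 assume f12: "f1 \<in> EXX" "f2 \<in> EXX" "f1 \<noteq> f2"
      have "phi f1 \<noteq> phi f2" using \<open>inj_on phi EXX\<close> f12 by (meson inj_on_contraD)
      then show "\<exists>g1\<in>EYY. \<exists>g2\<in>EYY. g1 \<noteq> g2 \<and> T ` Sm NX f1 \<subseteq> Sm NY g1 \<and> T ` Sm NX f2 \<subseteq> Sm NY g2"
        using phi[OF f12(1)] phi[OF f12(2)] by blast
    qed
  next
    assume h: "\<forall>f1\<in>EXX. \<forall>f2\<in>EXX. f1 \<noteq> f2 \<longrightarrow>
         (\<exists>g1\<in>EYY. \<exists>g2\<in>EYY. g1 \<noteq> g2 \<and> T ` Sm NX f1 \<subseteq> Sm NY g1 \<and> T ` Sm NX f2 \<subseteq> Sm NY g2)"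
    have "inj_on phi EXX"
    proof (rule inj_onI, rule ccontr)
      fix f1 f2 assume f: "f1 \<in> EXX" "f2 \<in> EXX" "phi f1 = phi f2" "f1 \<noteq> f2"
      then obtain g1 g2 where gg: "g1 \<noteq> g2" "T ` Sm NX f1 \<subseteq> Sm NY g1" "T ` Sm NX f2 \<subseteq> Sm NY g2"
        using h by blast
      have "g1 = phi f1" by (rule phi_uniq[OF f(1) gg(2)])
      moreover have "g2 = phi f2" by (rule phi_uniq[OF f(2) gg(3)])
      ultimately show False using gg(1) f(3) by simp
    qed
    then have "card (phi ` EXX) = card EXX" by (rule card_image)
    then show "card EXX = card EYY" using img by simp
  qed
  show ?thesis using part1 part2 unfolding EXX_def EYY_def by blast
qed

end
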